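(* Let $L$ be an h-local C-lattice domain in which every element is a join of principal elements. If $a,b\in L\setminus\{0\}$ and $m$ is a maximal element of $L$, then $(a:b)_m=(a_m:b_m)$.
   Context: A multiplicative lattice is a complete lattice $(L,\le)$ with bottom $0$ and top $1$ which is also a commutative monoid with identity $1$ such that $a(\bigvee_\alpha b_\alpha)=\bigvee_\alpha(ab_\alpha)$ for all $a,b_\alpha\in L$. For $x,y\in L$, $(y:x)=\bigvee\{c\in L: cx\le y\}$. An element $c$ is compact if $c\le\bigvee S$ implies $c\le\bigvee T$ for some finite $T\subseteq S$. A C-lattice is a multiplicative lattice in which $1$ is compact, the product of two compact elements is compact, and every element is a join of compact elements; $L^*$ denotes its compact elements. A proper element $p\ne1$ is prime if $xy\le p$ implies $x\le p$ or $y\le p$; maximal elements are maximal in $L\setminus\{1\}$; $L$ is a domain if $0$ is prime. An element $x$ is principal if $y\wedge zx=((y:x)\wedge z)x$ and $y\vee(z:x)=((yx\vee z):x)$ for all $y,z\in L$. For $p$ prime and $x\in L$, $x_p=\bigvee\{c\in L^*: cs\le x \text{ for some } s\in L^*,\ s\not\le p\}$. $L$ has finite character if every nonzero element is below only finitely many maximal elements; $L$ is h-local if it has finite character and every nonzero prime element is below a unique maximal element. *)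

theory Defs
  imports Main
begin

definition mult_lattice :: "('a::complete_lattice \<Rightarrow> 'a \<Rightarrow> 'a) \<Rightarrow> bool" where
  "mult_lattice mul \<longleftrightarrow>
     (\<forall>a b c. mul (mul a b) c = mul a (mul b c)) \<and>
     (\<forall>a b. mul a b = mul b a) \<and>
     (\<forall>a. mul top a = a) \<and>
     (\<forall>a B. mul a (Sup B) = Sup ((\<lambda>b. mul a b) ` B))"

definition res :: "('a::complete_lattice \<Rightarrow> 'a \<Rightarrow> 'a) \<Rightarrow> 'a \<Rightarrow> 'a \<Rightarrow> 'a" where
  "res mul y x = Sup {c. mul c x \<le> y}"

definition compact_el :: "'a::complete_lattice \<Rightarrow> bool" where
  "compact_el c \<longleftrightarrow> (\<forall>S. c \<le> Sup S \<longrightarrow> (\<exists>T. T \<subseteq> S \<and> finite T \<and> c \<le> Sup T))"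

definition C_lattice :: "('a::complete_lattice \<Rightarrow> 'a \<Rightarrow> 'a) \<Rightarrow> bool" where
  "C_lattice (mul::'a \<Rightarrow> 'a \<Rightarrow> 'a) \<longleftrightarrow> mult_lattice mul \<and> compact_el (top::'a) \<and>
     (\<forall>a b. compact_el a \<and> compact_el b \<longrightarrow> compact_el (mul a b)) \<and>
     (\<forall>x::'a. \<exists>S. (\<forall>c\<in>S. compact_el c) \<and> x = Sup S)"

definition prime_el :: "('a::complete_lattice \<Rightarrow> 'a \<Rightarrow> 'a) \<Rightarrow> 'a \<Rightarrow> bool" where
  "prime_el mul p \<longleftrightarrow> p \<noteq> top \<and> (\<forall>x y. mul x y \<le> p \<longrightarrow> x \<le> p \<or> y \<le> p)"

definition maximal_el :: "'a::complete_lattice \<Rightarrow> bool" where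
  "maximal_el m \<longleftrightarrow> m \<noteq> top \<and> (\<forall>x. m \<le> x \<and> x \<noteq> top \<longrightarrow> x = m)"

definition lattice_domain :: "('a::complete_lattice \<Rightarrow> 'a \<Rightarrow> 'a) \<Rightarrow> bool" where
  "lattice_domain (mul::'a \<Rightarrow> 'a \<Rightarrow> 'a) \<longleftrightarrow> prime_el mul (bot::'a)"

definition principal_el :: "('a::complete_lattice \<Rightarrow> 'a \<Rightarrow> 'a) \<Rightarrow> 'a \<Rightarrow> bool" where
  "principal_el mul x \<longleftrightarrow>
     (\<forall>y z. inf y (mul z x) = mul (inf (res mul y x) z) x \<and>
            sup y (res mul z x) = res mul (sup (mul y x) z) x)"

definition loc :: "('a::complete_lattice \<Rightarrow> 'a \<Rightarrow> 'a) \<Rightarrow> 'a \<Rightarrow> 'a \<Rightarrow> 'a" where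
  "loc mul p x = Sup {c. compact_el c \<and> (\<exists>s. compact_el s \<and> \<not> s \<le> p \<and> mul c s \<le> x)}"

definition h_local :: "('a::complete_lattice \<Rightarrow> 'a \<Rightarrow> 'a) \<Rightarrow> bool" where
  "h_local (mul::'a \<Rightarrow> 'a \<Rightarrow> 'a) \<longleftrightarrow>
     (\<forall>x::'a. x \<noteq> bot \<longrightarrow> finite {m. maximal_el m \<and> x \<le> m}) \<and>
     (\<forall>p. prime_el mul p \<and> p \<noteq> bot \<longrightarrow> (\<exists>!m. maximal_el m \<and> p \<le> m))"

end

theory Submission
  imports Defs
begin

lemma compactD: "compact_el c \<Longrightarrow> c \<le> Sup S \<Longrightarrow> \<exists>T. T \<subseteq> S \<and> finite T \<and> c \<le> Sup T"
  unfolding compact_el_def by blast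

lemma chain_max:
  fixes F :: "'b::order set"
  assumes "finite F" "F \<noteq> {}" "\<forall>a\<in>F. \<forall>b\<in>F. a \<le> b \<or> b \<le> a"
  shows "\<exists>f\<in>F. \<forall>g\<in>F. g \<le> f"
  using assms
proof (induction F rule: finite_ne_induct)
  case (singleton x) then show ?case by auto
next
  case (insert x F)
  then obtain f where f: "f \<in> F" "\<forall>g\<in>F. g \<le> f" by auto
  have "x \<le> f \<or> f \<le> x" using insert.prems f(1) by auto
  then show ?case using f by (auto intro: order_trans)
qed

lemma zorn_avoid:
  fixes x :: "'a::complete_lattice"
  assumes T: "\<forall>u\<in>T. compact_el u" and x: "\<forall>u\<in>T. \<not> u \<le> x"
  shows "\<exists>p. x \<le> p \<and> (\<forall>u\<in>T. \<not> u \<le> p) \<and> (\<forall>q. p \<le> q \<and> (\<forall>u\<in>T. \<not> u \<le> q) \<longrightarrow> q = p)"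
proof -
  define A where "A = {y. x \<le> y \<and> (\<forall>u\<in>T. \<not> u \<le> y)}"
  have po: "partial_order_on A (relation_of (\<le>) A)"
    by (rule partial_order_on_relation_ofI) (simp_all add: antisym)
  have "\<exists>m\<in>A. \<forall>a\<in>A. m \<le> a \<longrightarrow> a = m"
  proof (rule predicate_Zorn[OF po])
    fix C assume C: "C \<in> Chains (relation_of (\<le>) A)"
    then have CA: "C \<subseteq> A" and ch: "\<forall>a\<in>C. \<forall>b\<in>C. a \<le> b \<or> b \<le> a"
      unfolding Chains_def relation_of_def by blast+
    show "\<exists>u\<in>A. \<forall>a\<in>C. a \<le> u"
    proof (cases "C = {}")
      case True
      have "x \<in> A" using x unfolding A_def by simp
      then show ?thesis using True by blast
    next
      case False
      then obtain c0 where c0: "c0 \<in> C" by blast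
      have "Sup C \<in> A" unfolding A_def
      proof (intro CollectI conjI ballI)
        have "c0 \<in> A" using c0 CA by blast
        then have "x \<le> c0" unfolding A_def by simp
        also have "c0 \<le> Sup C" using c0 by (rule Sup_upper)
        finally show "x \<le> Sup C" .
        fix u assume u: "u \<in> T"
        show "\<not> u \<le> Sup C"
        proof
          assume uC: "u \<le> Sup C"
          have "compact_el u" using T u by blast
          then obtain F where F: "F \<subseteq> C" "finite F" "u \<le> Sup F"
            using compactD[OF _ uC] by blast
          show False
          proof (cases "F = {}")
            case True
            then have "u \<le> bot" using F by simp
            then have "u \<le> c0" using bot_least by (rule order_trans)
            moreover have "c0 \<in> A" using c0 CA by blast
            ultimately show False using u unfolding A_def by simp
          next
            case False
            have "\<forall>a\<in>F. \<forall>b\<in>F. a \<le> b \<or> b \<le> a" using ch F(1) by blast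
            then obtain f where f: "f \<in> F" "\<forall>g\<in>F. g \<le> f"
              using chain_max[OF F(2) False] by blast
            then have "Sup F \<le> f" by (simp add: Sup_least)
            then have "u \<le> f" using F(3) by (rule order_trans[rotated])
            moreover have "f \<in> A" using f F(1) CA by blast
            ultimately show False using u unfolding A_def by simp
          qed
        qed
      qed
      moreover have "\<forall>a\<in>C. a \<le> Sup C" by (simp add: Sup_upper)
      ultimately show ?thesis by blast
    qed
  qed
  then obtain p where pA: "p \<in> A" and pm: "\<forall>a\<in>A. p \<le> a \<longrightarrow> a = p" by blast
  have xp: "x \<le> p" and pT: "\<forall>u\<in>T. \<not> u \<le> p" using pA unfolding A_def by simp_all
  have "\<forall>q. p \<le> q \<and> (\<forall>u\<in>T. \<not> u \<le> q) \<longrightarrow> q = p"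
  proof (intro allI impI)
    fix q assume q: "p \<le> q \<and> (\<forall>u\<in>T. \<not> u \<le> q)"
    then have "x \<le> q" using xp by (blast intro: order_trans)
    then have "q \<in> A" using q unfolding A_def by simp
    then show "q = p" using pm q by blast
  qed
  then show ?thesis using xp pT by blast
qed

locale CL =
  fixes mul :: "'a::complete_lattice \<Rightarrow> 'a \<Rightarrow> 'a"
  assumes CL: "C_lattice mul"
begin

lemma assoc: "mul (mul a b) c = mul a (mul b c)"
  using CL unfolding C_lattice_def mult_lattice_def by blast
lemma comm: "mul a b = mul b a"
  using CL unfolding C_lattice_def mult_lattice_def by blast
lemma top_mul[simp]: "mul top a = a"
  using CL unfolding C_lattice_def mult_lattice_def by blast
lemma mul_top[simp]: "mul a top = a"
  using comm[of a top] by simp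
lemma mul_Sup: "mul a (Sup B) = Sup ((\<lambda>b. mul a b) ` B)"
  using CL unfolding C_lattice_def mult_lattice_def by blast
lemma Sup_mul: "mul (Sup B) a = Sup ((\<lambda>b. mul b a) ` B)"
proof -
  have e: "(\<lambda>b. mul a b) = (\<lambda>b. mul b a)" by (rule ext, rule comm)
  show ?thesis using comm[of "Sup B" a] mul_Sup[of a B] unfolding e by simp
qed
lemma top_compact: "compact_el (top::'a)"
  using CL unfolding C_lattice_def by blast
lemma mul_compact: "compact_el a \<Longrightarrow> compact_el b \<Longrightarrow> compact_el (mul a b)"
  using CL unfolding C_lattice_def by blast
lemma comm_left: "mul a (mul b c) = mul b (mul a c)"
  by (simp only: assoc[symmetric] comm[of a b])
lemmas ac = assoc comm comm_left

lemma mul_sup: "mul a (sup b c) = sup (mul a b) (mul a c)"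
  using mul_Sup[of a "{b,c}"] by simp
lemma mul_mono: "x \<le> y \<Longrightarrow> mul z x \<le> mul z y"
  by (metis mul_sup sup.absorb_iff2 sup.cobounded1)
lemma mul_mono2: "x \<le> y \<Longrightarrow> mul x z \<le> mul y z"
  using mul_mono[of x y z] comm[of x z] comm[of y z] by simp
lemma mul_mono12: "x \<le> y \<Longrightarrow> u \<le> v \<Longrightarrow> mul x u \<le> mul y v"
  by (meson mul_mono mul_mono2 order_trans)
lemma mul_le1: "mul x y \<le> x"
  using mul_mono[of y top x] by simp
lemma mul_le2: "mul x y \<le> y"
  using mul_le1[of y x] comm[of x y] by simp

lemma res_ge: "mul c x \<le> y \<Longrightarrow> c \<le> res mul y x"
  unfolding res_def by (simp add: Sup_upper)
lemma res_mul: "mul (res mul y x) x \<le> y"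
  unfolding res_def Sup_mul by (auto intro: Sup_least)

lemma compact_Sup: "(x::'a) = Sup {c. compact_el c \<and> c \<le> x}"
proof -
  have "\<forall>x::'a. \<exists>S. (\<forall>c\<in>S. compact_el c) \<and> x = Sup S"
    using CL unfolding C_lattice_def by (elim conjE)
  then obtain S where S: "\<forall>c\<in>S. compact_el c" "x = Sup S"
    by blast
  have "S \<subseteq> {c. compact_el c \<and> c \<le> x}"
  proof
    fix c assume c: "c \<in> S"
    have "c \<le> Sup S" using c by (rule Sup_upper)
    then show "c \<in> {c. compact_el c \<and> c \<le> x}" using S c by simp
  qed
  then have "Sup S \<le> Sup {c. compact_el c \<and> c \<le> x}" by (rule Sup_subset_mono)
  moreover have "Sup {c. compact_el c \<and> c \<le> x} \<le> x" by (rule Sup_least) simp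
  ultimately show ?thesis using S by (simp add: antisym)
qed

lemma le_by_compacts: "(\<And>c. compact_el c \<Longrightarrow> c \<le> (x::'a) \<Longrightarrow> c \<le> y) \<Longrightarrow> x \<le> y"
  by (subst compact_Sup) (auto intro: Sup_least)

lemma not_le_compact: "\<not> (x::'a) \<le> y \<Longrightarrow> \<exists>c. compact_el c \<and> c \<le> x \<and> \<not> c \<le> y"
  using le_by_compacts by blast

lemma mul_le_by_compacts:
  "(\<And>d. compact_el d \<Longrightarrow> d \<le> Y \<Longrightarrow> mul z d \<le> W) \<Longrightarrow> mul z Y \<le> W"
  by (subst compact_Sup) (auto simp: mul_Sup intro: Sup_least)

lemma maximal_prime:
  assumes "maximal_el m" shows "prime_el mul m"
  unfolding prime_el_def
proof (intro conjI allI impI)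
  show "m \<noteq> top" using assms unfolding maximal_el_def by blast
  fix x y assume xy: "mul x y \<le> m"
  show "x \<le> m \<or> y \<le> m"
  proof (rule ccontr)
    assume "\<not> (x \<le> m \<or> y \<le> m)"
    then have "sup m x = top" "sup m y = top" using assms unfolding maximal_el_def
      by (metis sup.cobounded1 sup.orderI sup_commute)+
    have 1: "mul (sup m x) m \<le> m" by (rule mul_le2)
    have "mul y (sup m x) = sup (mul y m) (mul y x)" by (rule mul_sup)
    moreover have "mul y x \<le> m" using xy comm[of x y] by simp
    ultimately have 2: "mul (sup m x) y \<le> m" using mul_le2[of y m] comm[of y] by simp
    have "mul (sup m x) (sup m y) \<le> m"
      unfolding mul_sup using 1 2 by simp
    then show False using \<open>sup m x = top\<close> \<open>sup m y = top\<close> assms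
      unfolding maximal_el_def by (simp add: top_unique)
  qed
qed


lemma loc_mem: "compact_el c \<Longrightarrow> compact_el s \<Longrightarrow> \<not> s \<le> p \<Longrightarrow> mul c s \<le> x \<Longrightarrow> c \<le> loc mul p x"
  unfolding loc_def by (rule Sup_upper) blast

lemma loc_ge: "p \<noteq> top \<Longrightarrow> x \<le> loc mul p x"
  by (rule le_by_compacts, rule loc_mem[OF _ top_compact]) (auto simp: top_unique)

lemma loc_mono: "x \<le> y \<Longrightarrow> loc mul p x \<le> loc mul p y"
  unfolding loc_def by (rule Sup_subset_mono) (blast intro: order_trans)

lemma loc_top: "\<not> a \<le> N \<Longrightarrow> loc mul N a = top"
proof -
  assume "\<not> a \<le> N"
  then obtain d where "compact_el d" "d \<le> a" "\<not> d \<le> N" using not_le_compact by blast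
  then have "top \<le> loc mul N a" by (intro loc_mem[OF top_compact]) auto
  then show ?thesis by (simp add: top_unique)
qed

lemma loc_compact:
  assumes p: "prime_el mul p" and c: "compact_el c" "c \<le> loc mul p x"
  shows "\<exists>t. compact_el t \<and> \<not> t \<le> p \<and> mul c t \<le> x"
proof -
  let ?S = "{c. compact_el c \<and> (\<exists>s. compact_el s \<and> \<not> s \<le> p \<and> mul c s \<le> x)}"
  have "c \<le> Sup ?S" using c(2) unfolding loc_def .
  then obtain T where T: "T \<subseteq> ?S" "finite T" "c \<le> Sup T"
    using compactD[OF c(1)] by blast
  have "\<exists>t. compact_el t \<and> \<not> t \<le> p \<and> (\<forall>d\<in>T. mul d t \<le> x)"
    using T(2,1)
  proof (induction T rule: finite_induct)
    case empty
    then show ?case using top_compact p unfolding prime_el_def by (auto simp: top_unique)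
  next
    case (insert d T)
    then obtain t where t: "compact_el t" "\<not> t \<le> p" "\<forall>d\<in>T. mul d t \<le> x" by auto
    obtain s where s: "compact_el s" "\<not> s \<le> p" "mul d s \<le> x" using insert by auto
    show ?case
    proof (intro exI[of _ "mul t s"] conjI ballI)
      show "compact_el (mul t s)" using t s mul_compact by blast
      show "\<not> mul t s \<le> p" using t s p unfolding prime_el_def by blast
      fix d' assume "d' \<in> insert d T"
      then show "mul d' (mul t s) \<le> x"
      proof
        assume "d' = d"
        have "mul d (mul t s) \<le> mul d s" using mul_le2[of t s] by (rule mul_mono)
        then show ?thesis using s(3) \<open>d' = d\<close> by simp
      next
        assume "d' \<in> T"
        have "mul d' (mul t s) \<le> mul d' t" using mul_le1[of t s] by (rule mul_mono)
        then show ?thesis using t(3) \<open>d' \<in> T\<close> by (auto intro: order_trans)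
      qed
    qed
  qed
  then obtain t where t: "compact_el t" "\<not> t \<le> p" "\<forall>d\<in>T. mul d t \<le> x" by blast
  have "mul c t \<le> mul (Sup T) t" using T(3) by (rule mul_mono2)
  also have "\<dots> \<le> x" unfolding Sup_mul using t(3) by (auto intro: Sup_least)
  finally show ?thesis using t by blast
qed

lemma loc_sat:
  assumes p: "prime_el mul p" and u: "compact_el u" "\<not> u \<le> p" and uv: "mul u v \<le> loc mul p x"
  shows "v \<le> loc mul p x"
proof (rule le_by_compacts)
  fix y assume y: "compact_el y" "y \<le> v"
  have "mul u y \<le> loc mul p x" using uv mul_mono[OF y(2)] order_trans by blast
  then obtain t where t: "compact_el t" "\<not> t \<le> p" "mul (mul u y) t \<le> x"
    using loc_compact[OF p mul_compact[OF u(1) y(1)]] by blast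
  have "mul y (mul u t) = mul (mul u y) t" by (simp only: ac)
  then show "y \<le> loc mul p x"
    using t u p y(1) mul_compact unfolding prime_el_def
    by (intro loc_mem[of y "mul u t"]) auto
qed

lemma loc_mult:
  assumes p: "prime_el mul p"
  shows "mul (loc mul p x) (loc mul p y) \<le> loc mul p (mul x y)"
proof (rule mul_le_by_compacts)
  fix d assume d: "compact_el d" "d \<le> loc mul p y"
  show "mul (loc mul p x) d \<le> loc mul p (mul x y)"
    unfolding comm[of _ d]
  proof (rule mul_le_by_compacts)
    fix c assume c: "compact_el c" "c \<le> loc mul p x"
    obtain t where t: "compact_el t" "\<not> t \<le> p" "mul c t \<le> x" using loc_compact[OF p c] by blast
    obtain t' where t': "compact_el t'" "\<not> t' \<le> p" "mul d t' \<le> y" using loc_compact[OF p d] by blast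
    have "mul (mul d c) (mul t t') = mul (mul c t) (mul d t')" by (simp only: ac)
    also have "\<dots> \<le> mul x y" using t t' mul_mono12 by blast
    finally show "mul d c \<le> loc mul p (mul x y)"
      using t t' c d p mul_compact unfolding prime_el_def
      by (intro loc_mem[of _ "mul t t'"]) auto
  qed
qed


lemma exists_maximal:
  assumes "(x::'a) \<noteq> top" shows "\<exists>N. maximal_el N \<and> x \<le> N"
proof -
  obtain p where p: "x \<le> p" "\<not> top \<le> p" "\<forall>q. p \<le> q \<and> \<not> top \<le> q \<longrightarrow> q = p"
    using zorn_avoid[of "{top}" x] top_compact assms by (auto simp: top_unique)
  then have "maximal_el p" unfolding maximal_el_def by (auto simp: top_unique)
  then show ?thesis using p by blast
qed

lemma exists_prime:
  assumes T: "\<forall>u\<in>T. compact_el u" and x: "\<forall>u\<in>T. \<not> u \<le> (x::'a)" and ne: "T \<noteq> {}"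
    and cl: "\<forall>u\<in>T. \<forall>v\<in>T. mul u v \<in> T"
  shows "\<exists>p. prime_el mul p \<and> x \<le> p \<and> (\<forall>u\<in>T. \<not> u \<le> p)"
proof -
  obtain p where p: "x \<le> p" "\<forall>u\<in>T. \<not> u \<le> p" "\<forall>q. p \<le> q \<and> (\<forall>u\<in>T. \<not> u \<le> q) \<longrightarrow> q = p"
    using zorn_avoid[OF T x] by blast
  have "prime_el mul p" unfolding prime_el_def
  proof (intro conjI allI impI)
    show "p \<noteq> top" using p(2) ne by auto
    fix a b assume ab: "mul a b \<le> p"
    show "a \<le> p \<or> b \<le> p"
    proof (rule ccontr)
      assume nab: "\<not> (a \<le> p \<or> b \<le> p)"
      have "sup p a \<noteq> p" using nab by (metis sup.cobounded2)
      then obtain u where u: "u \<in> T" "u \<le> sup p a" using p(3)[rule_format, of "sup p a"] by auto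
      have "sup p b \<noteq> p" using nab by (metis sup.cobounded2)
      then obtain v where v: "v \<in> T" "v \<le> sup p b" using p(3)[rule_format, of "sup p b"] by auto
      have "mul u v \<le> mul (sup p a) (sup p b)" using u v mul_mono12 by blast
      also have "\<dots> \<le> p"
      proof -
        have 1: "mul (sup p a) p \<le> p" by (rule mul_le2)
        have "mul b (sup p a) = sup (mul b p) (mul b a)" by (rule mul_sup)
        moreover have "mul b a \<le> p" using ab comm[of a b] by simp
        ultimately have 2: "mul (sup p a) b \<le> p" using mul_le2[of b p] comm[of b] by simp
        show ?thesis unfolding mul_sup using 1 2 by simp
      qed
      finally show False using cl u v p(2) by blast
    qed
  qed
  then show ?thesis using p by blast
qed


lemma loc_not_le:
  assumes h: "h_local mul" and N: "maximal_el N" and m: "maximal_el m" and Nm: "N \<noteq> m"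
    and a: "a \<noteq> bot"
  shows "\<not> loc mul N a \<le> m"
proof
  assume le: "loc mul N a \<le> m"
  have Np: "prime_el mul N" and mp: "prime_el mul m" using N m maximal_prime by auto
  define T where "T = {mul u v | u v. compact_el u \<and> \<not> u \<le> N \<and> compact_el v \<and> \<not> v \<le> m}"
  have T1: "\<forall>u\<in>T. compact_el u" unfolding T_def using mul_compact by blast
  have T2: "\<forall>u\<in>T. \<not> u \<le> loc mul N a"
  proof
    fix w assume "w \<in> T"
    then obtain u v where w: "w = mul u v" "compact_el u" "\<not> u \<le> N" "compact_el v" "\<not> v \<le> m"
      unfolding T_def by blast
    show "\<not> w \<le> loc mul N a"
    proof
      assume "w \<le> loc mul N a"
      then have "v \<le> loc mul N a" using loc_sat[OF Np w(2,3)] w(1) by blast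
      then show False using le w(5) by auto
    qed
  qed
  have tN: "\<not> top \<le> N" using N unfolding maximal_el_def by (simp add: top_unique)
  have tm: "\<not> top \<le> m" using m unfolding maximal_el_def by (simp add: top_unique)
  have "\<exists>u' v'. mul top top = mul u' v' \<and> compact_el u' \<and> \<not> u' \<le> N \<and> compact_el v' \<and> \<not> v' \<le> m"
    by (rule exI[of _ top], rule exI[of _ top]) (simp add: top_compact tm tN)
  then have "mul top top \<in> T" unfolding T_def by simp
  then have T3: "T \<noteq> {}" by blast
  have T4: "\<forall>u\<in>T. \<forall>v\<in>T. mul u v \<in> T"
  proof (intro ballI)
    fix w w' assume "w \<in> T" "w' \<in> T"
    then obtain u v u' v' where w: "w = mul u v" "compact_el u" "\<not> u \<le> N" "compact_el v" "\<not> v \<le> m"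
      and w': "w' = mul u' v'" "compact_el u'" "\<not> u' \<le> N" "compact_el v'" "\<not> v' \<le> m"
      unfolding T_def by blast
    have "mul w w' = mul (mul u u') (mul v v')" unfolding w w' by (simp only: ac)
    moreover have "compact_el (mul u u')" "compact_el (mul v v')" using w w' mul_compact by auto
    moreover have "\<not> mul u u' \<le> N" "\<not> mul v v' \<le> m"
      using w w' Np mp unfolding prime_el_def by blast+
    ultimately show "mul w w' \<in> T" unfolding T_def by blast
  qed
  obtain p where p: "prime_el mul p" "loc mul N a \<le> p" "\<forall>u\<in>T. \<not> u \<le> p"
    using exists_prime[OF T1 T2 T3 T4] by blast
  have pN: "p \<le> N"
  proof (rule ccontr)
    assume "\<not> p \<le> N"
    then obtain u where u: "compact_el u" "u \<le> p" "\<not> u \<le> N" using not_le_compact by blast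
    have "\<exists>u' v'. mul u top = mul u' v' \<and> compact_el u' \<and> \<not> u' \<le> N \<and> compact_el v' \<and> \<not> v' \<le> m"
      by (rule exI[of _ u], rule exI[of _ top]) (simp add: u top_compact tm)
    then have "mul u top \<in> T" unfolding T_def by simp
    then show False using p(3) u by simp
  qed
  have pm: "p \<le> m"
  proof (rule ccontr)
    assume "\<not> p \<le> m"
    then obtain u where u: "compact_el u" "u \<le> p" "\<not> u \<le> m" using not_le_compact by blast
    have "\<exists>u' v'. mul top u = mul u' v' \<and> compact_el u' \<and> \<not> u' \<le> N \<and> compact_el v' \<and> \<not> v' \<le> m"
      by (rule exI[of _ top], rule exI[of _ u]) (simp add: u top_compact tN)
    then have "mul top u \<in> T" unfolding T_def by simp
    then show False using p(3) u by simp
  qed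
  have "N \<noteq> top" using N unfolding maximal_el_def by simp
  then have "a \<le> loc mul N a" by (rule loc_ge)
  then have "a \<le> p" using p(2) by (rule order_trans)
  then have "p \<noteq> bot" using a by (auto simp: bot_unique)
  have hp: "\<forall>p. prime_el mul p \<and> p \<noteq> bot \<longrightarrow> (\<exists>!m. maximal_el m \<and> p \<le> m)"
    using h unfolding h_local_def by (elim conjE)
  have "\<exists>!M. maximal_el M \<and> p \<le> M" using hp p(1) \<open>p \<noteq> bot\<close> by simp
  then have "N = m" using N m pN pm by (elim ex1E) (metis)
  then show False using Nm by simp
qed

lemma below_all_loc:
  assumes "\<And>N. maximal_el N \<Longrightarrow> y \<le> loc mul N a"
  shows "y \<le> a"
proof (rule le_by_compacts)
  fix c assume c: "compact_el c" "c \<le> y"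
  define J where "J = res mul a c"
  show "c \<le> a"
  proof (cases "J = top")
    case True
    then show ?thesis using res_mul[of a c] unfolding J_def by simp
  next
    case False
    then obtain N where N: "maximal_el N" "J \<le> N" using exists_maximal by blast
    have "c \<le> loc mul N a" using assms[OF N(1)] c(2) by auto
    then obtain t where t: "compact_el t" "\<not> t \<le> N" "mul c t \<le> a"
      using loc_compact[OF maximal_prime[OF N(1)] c(1)] by blast
    have "t \<le> J" unfolding J_def using t(3) comm[of c t] by (simp add: res_ge)
    then show ?thesis using t(2) N(2) by auto
  qed
qed

lemma main:
  assumes h: "h_local mul" and a: "a \<noteq> bot" and m: "maximal_el m"
  shows "loc mul m (res mul a b) = res mul (loc mul m a) (loc mul m b)"
proof (rule antisym)
  have mp: "prime_el mul m" using maximal_prime[OF m] .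
  have mt: "m \<noteq> top" using m unfolding maximal_el_def by blast
  have "mul (loc mul m (res mul a b)) (loc mul m b) \<le> loc mul m (mul (res mul a b) b)"
    by (rule loc_mult[OF mp])
  also have "\<dots> \<le> loc mul m a" by (rule loc_mono[OF res_mul])
  finally show "loc mul m (res mul a b) \<le> res mul (loc mul m a) (loc mul m b)" by (rule res_ge)
  show "res mul (loc mul m a) (loc mul m b) \<le> loc mul m (res mul a b)"
  proof (rule le_by_compacts)
    fix x assume x: "compact_el x" "x \<le> res mul (loc mul m a) (loc mul m b)"
    define C where "C = sup a (mul x b)"
    have "mul x (loc mul m b) \<le> loc mul m a"
      using mul_mono2[OF x(2)] res_mul order_trans by blast
    moreover have "mul x b \<le> mul x (loc mul m b)" by (rule mul_mono[OF loc_ge[OF mt]])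
    ultimately have "mul x b \<le> loc mul m a" by (rule order_trans[rotated])
    then have Cm: "C \<le> loc mul m a" unfolding C_def using loc_ge[OF mt, of a] by (rule sup_least[rotated])
    define F where "F = {N. maximal_el N \<and> a \<le> N \<and> N \<noteq> m}"
    have hf: "\<forall>x::'a. x \<noteq> bot \<longrightarrow> finite {m. maximal_el m \<and> x \<le> m}"
      using h unfolding h_local_def by (elim conjE)
    have "finite {m. maximal_el m \<and> a \<le> m}" using hf a by simp
    moreover have "F \<subseteq> {m. maximal_el m \<and> a \<le> m}" unfolding F_def by blast
    ultimately have "finite F" by (rule rev_finite_subset)
    have gen: "\<And>G. finite G \<Longrightarrow> G \<subseteq> F \<Longrightarrow>
        \<exists>s. compact_el s \<and> \<not> s \<le> m \<and> (\<forall>N\<in>G. mul s C \<le> loc mul N a)"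
    proof -
      fix G :: "'a set" assume "finite G" "G \<subseteq> F"
      then show "\<exists>s. compact_el s \<and> \<not> s \<le> m \<and> (\<forall>N\<in>G. mul s C \<le> loc mul N a)"
      proof (induction G rule: finite_induct)
        case empty
        have "\<not> top \<le> m" using mt by (simp add: top_unique)
        then show ?case using top_compact by (intro exI[of _ top]) simp
      next
        case (insert N G)
        have "G \<subseteq> F" "N \<in> F" using insert.prems by blast+
        then obtain s where s: "compact_el s" "\<not> s \<le> m" "\<forall>N\<in>G. mul s C \<le> loc mul N a"
          using insert.IH by blast
        have N: "maximal_el N" "N \<noteq> m" using \<open>N \<in> F\<close> unfolding F_def by simp_all
        have "\<not> loc mul N a \<le> m" by (rule loc_not_le[OF h N(1) m N(2) a])
        moreover have "loc mul N a \<le> res mul (loc mul N a) C" by (rule res_ge[OF mul_le1])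
        ultimately have "\<not> res mul (loc mul N a) C \<le> m" using order_trans by blast
        then obtain sN where sN: "compact_el sN" "sN \<le> res mul (loc mul N a) C" "\<not> sN \<le> m"
          using not_le_compact by blast
        have sNC: "mul sN C \<le> loc mul N a" using mul_mono2[OF sN(2)] res_mul by (rule order_trans)
        show ?case
        proof (intro exI[of _ "mul s sN"] conjI ballI)
          show "compact_el (mul s sN)" using s sN mul_compact by blast
          show "\<not> mul s sN \<le> m" using s sN mp unfolding prime_el_def by blast
          fix N' assume "N' \<in> insert N G"
          then show "mul (mul s sN) C \<le> loc mul N' a"
          proof
            assume "N' = N"
            have "mul (mul s sN) C = mul s (mul sN C)" by (rule assoc)
            also have "\<dots> \<le> mul sN C" by (rule mul_le2)
            finally have "mul (mul s sN) C \<le> loc mul N a" using sNC by (rule order_trans)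
            then show ?thesis using \<open>N' = N\<close> by simp
          next
            assume "N' \<in> G"
            have "mul (mul s sN) C \<le> mul s C" by (rule mul_mono2[OF mul_le1])
            moreover have "mul s C \<le> loc mul N' a" using s(3) \<open>N' \<in> G\<close> by blast
            ultimately show ?thesis by (rule order_trans)
          qed
        qed
      qed
    qed
    obtain s where s: "compact_el s" "\<not> s \<le> m" "\<forall>N\<in>F. mul s C \<le> loc mul N a"
      using gen[OF \<open>finite F\<close> order_refl] by blast
    have sCa: "mul s C \<le> a"
    proof (rule below_all_loc)
      fix N :: 'a assume N: "maximal_el N"
      show "mul s C \<le> loc mul N a"
      proof (cases "N = m")
        case True
        have "mul s C \<le> loc mul m a" using mul_le2[of s C] Cm by (rule order_trans)
        then show ?thesis using True by simp
      next
        case False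
        then have "N \<noteq> m" .
        show ?thesis
        proof (cases "a \<le> N")
          case True
          have "N \<in> F" unfolding F_def using N True \<open>N \<noteq> m\<close> by simp
          then show ?thesis using s(3) by blast
        next
          case False
          then show ?thesis using loc_top by simp
        qed
      qed
    qed
    have "mul (mul x s) b = mul s (mul x b)" by (simp only: ac)
    also have "\<dots> \<le> mul s C" unfolding C_def by (rule mul_mono) simp
    finally have "mul (mul x s) b \<le> a" using sCa by (rule order_trans)
    then have "mul x s \<le> res mul a b" by (rule res_ge)
    then show "x \<le> loc mul m (res mul a b)" by (rule loc_mem[OF x(1) s(1) s(2)])
  qed
qed

end

theorem proposition3p11:
  fixes mul :: "'a::complete_lattice \<Rightarrow> 'a \<Rightarrow> 'a"
    and a b m :: 'a
  assumes "C_lattice mul"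
    and "lattice_domain mul"
    and "h_local mul"
    and "\<forall>x. \<exists>S. (\<forall>s\<in>S. principal_el mul s) \<and> x = Sup S"
    and "a \<noteq> bot" and "b \<noteq> bot"
    and "maximal_el m"
  shows "loc mul m (res mul a b) = res mul (loc mul m a) (loc mul m b)"
proof -
  interpret CL mul by (rule CL.intro) (rule assms(1))
  show ?thesis by (rule main[OF assms(3) assms(5) assms(7)])
qed

end
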